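(* Let $L:[0,T]\times\mathbb{R}^N\times\mathbb{R}^N\to\mathbb{R}\cup\{\pm\infty\}$ satisfy (L1)–(L3). Let $(t_0,x_0,u_0)\in(0,T]\times\mathbb{R}^N\times\mathbb{R}$ and $v_0\in\mathrm{dom}\,L(t_0,x_0,\cdot)$. Then there exist $\tau>0$ and a $C^1$ function $(x,u):[t_0-\tau,t_0]\to\mathbb{R}^N\times\mathbb{R}$ with $(x,u)(t_0)=(x_0,u_0)$ such that $(\dot x(t),\dot u(t))\in Q(t,x(t))$ for all $t\in[t_0-\tau,t_0]$ and the left derivative at $t_0$ is $(\dot x,\dot u)(t_0^-)=(v_0,-L(t_0,x_0,v_0))$.
   Context: $\mathrm{dom}\,L(t,x,\cdot)=\{v:L(t,x,v)\neq\pm\infty\}$; proper means never $-\infty$ and not identically $+\infty$. $Q(t,x):=\{(v,\eta)\in\mathbb{R}^N\times\mathbb{R}: L(t,x,v)\leq-\eta\}$ for $(t,x)\in[0,T]\times\mathbb{R}^N$. (L1) $L$ is lower semicontinuous in all variables. (L2) $L(t,x,\cdot)$ is convex and proper for every $t,x$. (L3) for every $(t,x,v)$ and every $(t_n,x_n)\to(t,x)$ in $[0,T]\times\mathbb{R}^N$ there exist $v_n\to v$ with $L(t_n,x_n,v_n)\to L(t,x,v)$. *)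

theory Defs
  imports "HOL-Analysis.Analysis"
begin

type_synonym 'a lagrangian = "real \<Rightarrow> 'a \<Rightarrow> 'a \<Rightarrow> ereal"

definition domL :: "'a lagrangian \<Rightarrow> real \<Rightarrow> 'a \<Rightarrow> 'a set" where
  "domL L t x = {v. L t x v \<noteq> \<infinity> \<and> L t x v \<noteq> -\<infinity>}"

definition Qset :: "'a lagrangian \<Rightarrow> real \<Rightarrow> 'a \<Rightarrow> ('a \<times> real) set" where
  "Qset L t x = {(v, \<eta>). L t x v \<le> ereal (-\<eta>)}"

definition L1 :: "real \<Rightarrow> 'a::euclidean_space lagrangian \<Rightarrow> bool" where
  "L1 T L \<longleftrightarrow> (\<forall>t x v tn xn vn.
      t \<in> {0..T} \<and> (\<forall>n. tn n \<in> {0..T}) \<and> tn \<longlonglongrightarrow> t \<and> xn \<longlonglongrightarrow> x \<and> vn \<longlonglongrightarrow> v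
      \<longrightarrow> L t x v \<le> liminf (\<lambda>n. L (tn n) (xn n) (vn n)))"

definition L2 :: "real \<Rightarrow> 'a::euclidean_space lagrangian \<Rightarrow> bool" where
  "L2 T L \<longleftrightarrow> (\<forall>t\<in>{0..T}. \<forall>x.
      (\<forall>v. L t x v \<noteq> -\<infinity>) \<and> (\<exists>v. L t x v \<noteq> \<infinity>) \<and>
      (\<forall>v w (a::real). 0 < a \<and> a < 1 \<longrightarrow>
          L t x (a *\<^sub>R v + (1 - a) *\<^sub>R w) \<le> ereal a * L t x v + ereal (1 - a) * L t x w))"

definition L3 :: "real \<Rightarrow> 'a::euclidean_space lagrangian \<Rightarrow> bool" where
  "L3 T L \<longleftrightarrow> (\<forall>t x v tn xn.
      t \<in> {0..T} \<and> (\<forall>n. tn n \<in> {0..T}) \<and> tn \<longlonglongrightarrow> t \<and> xn \<longlonglongrightarrow> x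
      \<longrightarrow> (\<exists>vn. vn \<longlonglongrightarrow> v \<and> (\<lambda>n. L (tn n) (xn n) (vn n)) \<longlonglongrightarrow> L t x v))"

end

theory Submission
  imports Defs "HOL-Complex_Analysis.Great_Picard"
begin


lemma approx_sel:
  fixes K :: "'p::metric_space set" and \<Phi> :: "'p \<Rightarrow> 'y::real_normed_vector set"
  assumes K: "compact K"
    and cvx: "\<And>p. p \<in> K \<Longrightarrow> convex (\<Phi> p)"
    and ne: "\<And>p. p \<in> K \<Longrightarrow> \<Phi> p \<noteq> {}"
    and lsc: "\<And>p y e. p \<in> K \<Longrightarrow> y \<in> \<Phi> p \<Longrightarrow> 0 < e \<Longrightarrow>
               \<exists>d>0. \<forall>q\<in>K. dist q p < d \<longrightarrow> (\<exists>y'\<in>\<Phi> q. dist y' y < e)"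
    and p0: "p0 \<in> K" and y0: "y0 \<in> \<Phi> p0" and e: "0 < e"
  shows "\<exists>g. continuous_on K g \<and> g p0 = y0 \<and> (\<forall>p\<in>K. \<exists>y\<in>\<Phi> p. dist (g p) y < e)"
proof -
  define yp where "yp p = (SOME y. y \<in> \<Phi> p)" for p
  have yp: "yp p \<in> \<Phi> p" if "p \<in> K" for p
    using ne[OF that] unfolding yp_def by (meson ex_in_conv someI_ex)
  have "\<forall>p\<in>K. \<exists>d>0. \<forall>q\<in>K. dist q p < d \<longrightarrow> (\<exists>y'\<in>\<Phi> q. dist y' (yp p) < e/2)"
    by (meson lsc yp e half_gt_zero)
  then obtain d where dpos: "\<And>p. p \<in> K \<Longrightarrow> d p > 0"
    and dlsc: "\<And>p q. p \<in> K \<Longrightarrow> q \<in> K \<Longrightarrow> dist q p < d p \<Longrightarrow> \<exists>y'\<in>\<Phi> q. dist y' (yp p) < e/2"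
    by metis
  have "K \<subseteq> (\<Union>p\<in>K. ball p (d p))"
    using dpos by force
  then obtain F where F: "F \<subseteq> K" "finite F" "K \<subseteq> (\<Union>p\<in>F. ball p (d p))"
    using compactE_image[OF K, of K "\<lambda>p. ball p (d p)"] by blast
  define \<phi> where "\<phi> p q = max 0 (d p - dist q p)" for p q
  define S where "S q = (\<Sum>p\<in>F. \<phi> p q)" for q
  have \<phi>nn: "\<phi> p q \<ge> 0" for p q unfolding \<phi>_def by simp
  have Spos: "S q > 0" if qK: "q \<in> K" for q
  proof -
    obtain p where "p \<in> F" "dist p q < d p" using F(3) qK by auto
    then have "\<phi> p q > 0" unfolding \<phi>_def by (simp add: dist_commute)
    then show ?thesis unfolding S_def
      using \<open>p \<in> F\<close> F(2) \<phi>nn by (meson sum_pos2)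
  qed
  define g1 where "g1 q = (1 / S q) *\<^sub>R (\<Sum>p\<in>F. \<phi> p q *\<^sub>R yp p)" for q
  have contg1: "continuous_on K g1"
    unfolding g1_def S_def \<phi>_def
    using Spos[unfolded S_def \<phi>_def]
    by (intro continuous_intros) (auto simp: less_irrefl dest!: Spos[unfolded S_def \<phi>_def])
  have g1: "\<exists>z\<in>\<Phi> q. dist (g1 q) z \<le> e/2" if q: "q \<in> K" for q
  proof -
    obtain z0 where z0: "z0 \<in> \<Phi> q" using ne[OF q] by auto
    define yq where "yq p = (if \<phi> p q > 0 then (SOME y'. y' \<in> \<Phi> q \<and> dist y' (yp p) < e/2) else z0)" for p
    have yq: "yq p \<in> \<Phi> q \<and> (\<phi> p q > 0 \<longrightarrow> dist (yq p) (yp p) < e/2)" if "p \<in> F" for p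
    proof (cases "\<phi> p q > 0")
      case True
      then have "dist q p < d p" unfolding \<phi>_def by simp
      then have "\<exists>y'. y' \<in> \<Phi> q \<and> dist y' (yp p) < e/2"
        using dlsc[of p q] F(1) that q by blast
      from someI_ex[OF this] show ?thesis using True unfolding yq_def by simp
    next
      case False
      then show ?thesis using z0 unfolding yq_def by simp
    qed
    define a where "a p = \<phi> p q / S q" for p
    have a1: "(\<Sum>p\<in>F. a p) = 1" unfolding a_def
      using Spos[OF q] by (simp add: S_def flip: sum_divide_distrib)
    have ann: "a p \<ge> 0" for p unfolding a_def using Spos[OF q] \<phi>nn by simp
    define z where "z = (\<Sum>p\<in>F. a p *\<^sub>R yq p)"
    have zin: "z \<in> \<Phi> q" unfolding z_def
      by (rule convex_sum[OF F(2) cvx[OF q] a1 ann]) (use yq in auto)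
    have "g1 q - z = (\<Sum>p\<in>F. a p *\<^sub>R (yp p - yq p))"
      unfolding g1_def z_def a_def
      by (simp add: scaleR_sum_right scaleR_diff_right sum_subtractf divide_inverse_commute)
    also have "norm \<dots> \<le> (\<Sum>p\<in>F. a p * norm (yp p - yq p))"
      by (rule order_trans[OF norm_sum]) (simp add: ann)
    also have "\<dots> \<le> (\<Sum>p\<in>F. a p * (e/2))"
    proof (rule sum_mono)
      fix p assume p: "p \<in> F"
      show "a p * norm (yp p - yq p) \<le> a p * (e / 2)"
      proof (cases "\<phi> p q > 0")
        case True
        then have "norm (yp p - yq p) \<le> e/2" using yq[OF p]
          by (simp add: dist_norm norm_minus_commute)
        then show ?thesis using ann[of p] by (rule mult_left_mono)
      next
        case False
        then have "a p = 0" unfolding a_def using \<phi>nn[of p q] by simp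
        then show ?thesis by simp
      qed
    qed
    also have "\<dots> = e/2" using a1 by (metis mult_1 sum_distrib_right)
    finally show ?thesis using zin by (auto simp: dist_norm)
  qed
  obtain \<rho> where \<rho>: "\<rho> > 0" and \<rho>lsc: "\<And>q. q \<in> K \<Longrightarrow> dist q p0 < \<rho> \<Longrightarrow> \<exists>y'\<in>\<Phi> q. dist y' y0 < e/2"
    using lsc[OF p0 y0, of "e/2"] e by auto
  define \<psi> where "\<psi> q = max 0 (1 - dist q p0 / \<rho>)" for q
  define g where "g q = \<psi> q *\<^sub>R y0 + (1 - \<psi> q) *\<^sub>R g1 q" for q
  have contg: "continuous_on K g"
    unfolding g_def \<psi>_def using contg1 \<rho> by (intro continuous_intros) auto
  have gp0: "g p0 = y0" unfolding g_def \<psi>_def by simp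
  have "\<exists>y\<in>\<Phi> p. dist (g p) y < e" if p: "p \<in> K" for p
  proof -
    obtain z1 where z1: "z1 \<in> \<Phi> p" "dist (g1 p) z1 \<le> e/2" using g1[OF p] by blast
    show ?thesis
    proof (cases "\<psi> p > 0")
      case False
      then have "\<psi> p = 0" unfolding \<psi>_def by simp
      then show ?thesis using z1 e unfolding g_def by (intro bexI[of _ z1]) auto
    next
      case True
      then have "0 < 1 - dist p p0 / \<rho>" unfolding \<psi>_def by simp
      then have "dist p p0 < \<rho>" using \<rho> by (simp add: field_simps)
      then obtain y' where y': "y' \<in> \<Phi> p" "dist y' y0 < e/2" using \<rho>lsc p by blast
      have ps: "0 \<le> \<psi> p" "\<psi> p \<le> 1" unfolding \<psi>_def using \<rho> by auto
      define z where "z = \<psi> p *\<^sub>R y' + (1 - \<psi> p) *\<^sub>R z1"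
      have zin: "z \<in> \<Phi> p" unfolding z_def
        using cvx[OF p] y'(1) z1(1) ps by (simp add: convex_def)
      have "g p - z = \<psi> p *\<^sub>R (y0 - y') + (1 - \<psi> p) *\<^sub>R (g1 p - z1)"
        unfolding g_def z_def by (simp add: algebra_simps)
      then have "norm (g p - z) \<le> \<psi> p * norm (y0 - y') + (1 - \<psi> p) * norm (g1 p - z1)"
        using ps by (metis (no_types, lifting) abs_of_nonneg diff_ge_0_iff_ge norm_scaleR norm_triangle_ineq order_trans)
      also have "\<dots> \<le> \<psi> p * (e/2) + (1 - \<psi> p) * (e/2)"
        using ps y'(2) z1(2) by (intro add_mono mult_left_mono) (auto simp: dist_norm norm_minus_commute)
      also have "\<dots> = (\<psi> p + (1 - \<psi> p)) * (e/2)" by (simp only: distrib_right)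
      also have "\<dots> = e/2" by simp
      finally show ?thesis using zin e by (intro bexI[of _ z]) (auto simp: dist_norm)
    qed
  qed
  then show ?thesis using contg gp0 by blast
qed



lemma michael_sel:
  fixes K :: "'p::metric_space set" and E :: "'p \<Rightarrow> 'y::banach set"
  assumes K: "compact K"
    and cvx: "\<And>p. p \<in> K \<Longrightarrow> convex (E p)"
    and cl: "\<And>p. p \<in> K \<Longrightarrow> closed (E p)"
    and ne: "\<And>p. p \<in> K \<Longrightarrow> E p \<noteq> {}"
    and lsc: "\<And>p y e. p \<in> K \<Longrightarrow> y \<in> E p \<Longrightarrow> 0 < e \<Longrightarrow>
               \<exists>d>0. \<forall>q\<in>K. dist q p < d \<longrightarrow> (\<exists>y'\<in>E q. dist y' y < e)"
    and p0: "p0 \<in> K" and y0: "y0 \<in> E p0"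
  shows "\<exists>f. continuous_on K f \<and> f p0 = y0 \<and> (\<forall>p\<in>K. f p \<in> E p)"
proof -
  define P where "P n f \<longleftrightarrow> continuous_on K f \<and> f p0 = y0 \<and> (\<forall>p\<in>K. \<exists>y\<in>E p. dist (f p) y < (1/2::real)^n)" for n f
  define Q where "Q n f g \<longleftrightarrow> (\<forall>p\<in>K. dist (g p) (f p) \<le> 2 * (1/2::real)^n)" for n and f g :: "'p \<Rightarrow> 'y"
  have "\<exists>f. P 0 f"
    using approx_sel[OF K cvx ne lsc p0 y0, of 1] unfolding P_def by auto
  moreover have "\<exists>g. P (Suc n) g \<and> Q n f g" if Pf: "P n f" for n f
  proof -
    define \<Phi> where "\<Phi> p = E p \<inter> ball (f p) ((1/2)^n)" for p
    have "\<exists>g. continuous_on K g \<and> g p0 = y0 \<and> (\<forall>p\<in>K. \<exists>y\<in>\<Phi> p. dist (g p) y < (1/2)^Suc n)"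
    proof (rule approx_sel[OF K])
      show "convex (\<Phi> p)" if "p \<in> K" for p
        unfolding \<Phi>_def using cvx[OF that] by (simp add: convex_Int)
      show "\<Phi> p \<noteq> {}" if pK: "p \<in> K" for p
      proof -
        obtain y where "y \<in> E p" "dist (f p) y < (1/2)^n" using Pf pK unfolding P_def by blast
        then show ?thesis unfolding \<Phi>_def by auto
      qed
      show "p0 \<in> K" by (rule p0)
      show "y0 \<in> \<Phi> p0" using Pf y0 unfolding \<Phi>_def P_def by simp
      show "0 < (1/2::real)^Suc n" by simp
      show "\<exists>d>0. \<forall>q\<in>K. dist q p < d \<longrightarrow> (\<exists>y'\<in>\<Phi> q. dist y' y < e)"
        if p: "p \<in> K" and y: "y \<in> \<Phi> p" and e: "0 < e" for p y e
      proof -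
        define m where "m = (1/2::real)^n - dist (f p) y"
        have m: "m > 0" using y unfolding \<Phi>_def m_def by simp
        obtain d1 where d1: "d1 > 0" "\<And>q. q \<in> K \<Longrightarrow> dist q p < d1 \<Longrightarrow> \<exists>y'\<in>E q. dist y' y < min e (m/2)"
          using lsc[OF p _ , of y "min e (m/2)"] y e m unfolding \<Phi>_def by auto
        have "continuous_on K f" using Pf unfolding P_def by simp
        then obtain d2 where d2: "d2 > 0" "\<And>q. q \<in> K \<Longrightarrow> dist q p < d2 \<Longrightarrow> dist (f q) (f p) < m/2"
          using p m unfolding continuous_on_iff by (metis half_gt_zero)
        show ?thesis
        proof (intro exI[of _ "min d1 d2"] conjI ballI impI)
          show "0 < min d1 d2" using d1 d2 by simp
          fix q assume q: "q \<in> K" "dist q p < min d1 d2"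
          then obtain y' where y': "y' \<in> E q" "dist y' y < min e (m/2)" using d1 by auto
          have "dist (f q) y' \<le> dist (f q) (f p) + dist (f p) y + dist y y'"
            by (metis dist_triangle add.commute add_left_mono order_trans dist_commute)
          also have "\<dots> < (1/2)^n" using d2(2)[of q] q y'(2) unfolding m_def
            by (auto simp: dist_commute)
          finally show "\<exists>y'\<in>\<Phi> q. dist y' y < e"
            using y' unfolding \<Phi>_def by (intro bexI[of _ y']) auto
        qed
      qed
    qed
    then obtain g where g: "continuous_on K g" "g p0 = y0" "\<And>p. p \<in> K \<Longrightarrow> \<exists>y\<in>\<Phi> p. dist (g p) y < (1/2)^Suc n"
      by blast
    have "P (Suc n) g" unfolding P_def using g unfolding \<Phi>_def by fastforce
    moreover have "Q n f g" unfolding Q_def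
    proof
      fix p assume p: "p \<in> K"
      then obtain y where y: "y \<in> \<Phi> p" "dist (g p) y < (1/2)^Suc n" using g(3) by blast
      have "dist (g p) (f p) \<le> dist (g p) y + dist y (f p)" by (rule dist_triangle)
      also have "\<dots> \<le> (1/2)^Suc n + (1/2)^n" using y unfolding \<Phi>_def by (auto simp: dist_commute)
      also have "\<dots> \<le> 2 * (1/2::real)^n" by simp
      finally show "dist (g p) (f p) \<le> 2 * (1/2)^n" .
    qed
    ultimately show ?thesis by blast
  qed
  ultimately obtain F where F: "\<And>n. P n (F n)" "\<And>n. Q n (F n) (F (Suc n))"
    using dependent_nat_choice[of P Q] by blast
  have bnd: "dist (F m p) (F n p) \<le> 4 * (1/2)^n - 4 * (1/2::real)^m" if "n \<le> m" "p \<in> K" for m n p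
    using that(1)
  proof (induction m rule: dec_induct)
    case base then show ?case by simp
  next
    case (step m)
    have "dist (F (Suc m) p) (F n p) \<le> dist (F (Suc m) p) (F m p) + dist (F m p) (F n p)"
      by (rule dist_triangle)
    also have "\<dots> \<le> 2 * (1/2)^m + (4 * (1/2)^n - 4 * (1/2::real)^m)"
      using F(2)[of m] that(2) step.IH unfolding Q_def by (intro add_mono) auto
    also have "\<dots> = 4 * (1/2)^n - 4 * (1/2::real)^Suc m" by simp
    finally show ?case .
  qed
  have bnd2: "dist (F m p) (F n p) \<le> 4 * (1/2::real)^n" if "n \<le> m" "p \<in> K" for m n p
  proof -
    have "(0::real) \<le> (1/2)^m" by simp
    then show ?thesis using bnd[OF that] by linarith
  qed
  have "\<exists>l. (\<lambda>n. F n p) \<longlonglongrightarrow> l" if p: "p \<in> K" for p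
  proof -
    have "Cauchy (\<lambda>n. F n p)"
    proof (rule metric_CauchyI)
      fix e :: real assume e: "0 < e"
      obtain N where N: "(1/2::real)^N < e/8" using real_arch_pow_inv[of "e/8" "1/2"] e by auto
      show "\<exists>M. \<forall>m\<ge>M. \<forall>n\<ge>M. dist (F m p) (F n p) < e"
      proof (intro exI allI impI)
        fix m n assume "N \<le> m" "N \<le> n"
        then have "dist (F m p) (F N p) \<le> 4 * (1/2)^N" "dist (F n p) (F N p) \<le> 4 * (1/2)^N"
          using bnd2 p by auto
        moreover have "dist (F m p) (F n p) \<le> dist (F m p) (F N p) + dist (F n p) (F N p)"
          by (rule dist_triangle2)
        ultimately show "dist (F m p) (F n p) < e" using N by linarith
      qed
    qed
    then show ?thesis using Cauchy_convergent_iff convergent_def by blast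
  qed
  then obtain f where f: "\<And>p. p \<in> K \<Longrightarrow> (\<lambda>n. F n p) \<longlonglongrightarrow> f p" by metis
  have fb: "dist (f p) (F n p) \<le> 4 * (1/2::real)^n" if p: "p \<in> K" for p n
  proof -
    have "((\<lambda>m. dist (F m p) (F n p)) \<longlonglongrightarrow> dist (f p) (F n p))"
      by (intro tendsto_intros f p)
    moreover have "\<forall>\<^sub>F m in sequentially. dist (F m p) (F n p) \<le> 4 * (1/2)^n"
      unfolding eventually_sequentially using bnd2 p by blast
    ultimately show ?thesis by (rule tendsto_upperbound) simp
  qed
  have "continuous_on K f"
  proof (rule uniform_limit_theorem)
    show "\<forall>\<^sub>F n in sequentially. continuous_on K (F n)" using F(1) unfolding P_def by simp
    show "uniform_limit K F f sequentially"
      unfolding uniform_limit_iff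
    proof (intro allI impI)
      fix e :: real assume e: "0 < e"
      obtain N where N: "(1/2::real)^N < e/4" using real_arch_pow_inv[of "e/4" "1/2"] e by auto
      show "\<forall>\<^sub>F n in sequentially. \<forall>x\<in>K. dist (F n x) (f x) < e"
        unfolding eventually_sequentially
      proof (intro exI allI impI ballI)
        fix n x assume "N \<le> n" "x \<in> K"
        then have "dist (f x) (F n x) \<le> 4 * (1/2)^n" "(1/2::real)^n \<le> (1/2)^N"
          using fb by (auto intro: power_decreasing)
        then have "dist (f x) (F n x) < e" using N by linarith
        then show "dist (F n x) (f x) < e" by (simp add: dist_commute)
      qed
    qed
  qed simp
  moreover have "f p0 = y0"
    using f[OF p0] F(1) unfolding P_def by (simp add: LIMSEQ_const_iff)
  moreover have "f p \<in> E p" if p: "p \<in> K" for p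
  proof -
    have "\<exists>y\<in>E p. dist y (f p) < e" if e: "e > 0" for e
    proof -
      obtain N where N: "(1/2::real)^N < e/5" using real_arch_pow_inv[of "e/5" "1/2"] e by auto
      obtain y where y: "y \<in> E p" "dist (F N p) y < (1/2)^N" using F(1)[of N] p unfolding P_def by blast
      have "dist y (f p) \<le> dist (F N p) y + dist (f p) (F N p)"
        by (metis dist_commute dist_triangle)
      also have "\<dots> < e" using y(2) fb[OF p, of N] N by linarith
      finally show ?thesis using y(1) by blast
    qed
    then show ?thesis using closed_approachable[OF cl[OF p]] by blast
  qed
  ultimately show ?thesis by blast
qed



primrec eulX :: "(real \<Rightarrow> 'b::real_normed_vector \<Rightarrow> 'b) \<Rightarrow> real \<Rightarrow> 'b \<Rightarrow> real \<Rightarrow> nat \<Rightarrow> 'b" where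
  "eulX W t0 z0 h 0 = z0"
| "eulX W t0 z0 h (Suc j) = eulX W t0 z0 h j - h *\<^sub>R W (t0 - real j * h) (eulX W t0 z0 h j)"

definition ell :: "real \<Rightarrow> real \<Rightarrow> nat \<Rightarrow> real \<Rightarrow> real" where
  "ell h t0 j t = max 0 (min h (t0 - real j * h - t))"

definition eulP :: "(real \<Rightarrow> 'b::real_normed_vector \<Rightarrow> 'b) \<Rightarrow> real \<Rightarrow> 'b \<Rightarrow> real \<Rightarrow> nat \<Rightarrow> real \<Rightarrow> 'b" where
  "eulP W t0 z0 h N t = z0 - (\<Sum>j<N. ell h t0 j t *\<^sub>R W (t0 - real j * h) (eulX W t0 z0 h j))"

lemma ell_sum:
  assumes "h > 0"
  shows "(\<Sum>j<N. ell h t0 j t) = max 0 (min (real N * h) (t0 - t))"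
proof (induction N)
  case 0 then show ?case by simp
next
  case (Suc N)
  define A where "A = real N * h"
  have A0: "0 \<le> A" using assms unfolding A_def by simp
  have e: "real (Suc N) * h = A + h" unfolding A_def by (simp add: algebra_simps)
  have l: "ell h t0 N t = max 0 (min h (t0 - A - t))" unfolding ell_def A_def by simp
  have "(\<Sum>j<Suc N. ell h t0 j t) = max 0 (min A (t0 - t)) + max 0 (min h (t0 - A - t))"
    using Suc.IH l by (simp add: A_def)
  also have "\<dots> = max 0 (min (A + h) (t0 - t))"
    using A0 assms by (simp add: max_def min_def)
  finally show ?case unfolding e .
qed

lemma ell_grid:
  assumes "h > 0"
  shows "ell h t0 j (t0 - real k * h) = (if j < k then h else 0)"
proof -
  have eq: "t0 - real j * h - (t0 - real k * h) = (real k - real j) * h" by (simp add: algebra_simps)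
  show ?thesis
  proof (cases "j < k")
    case True
    then have "real k - real j \<ge> 1" by simp
    then have "(real k - real j) * h \<ge> 1 * h" using assms by (intro mult_right_mono) auto
    then show ?thesis using True assms unfolding ell_def eq by simp
  next
    case False
    then have "real k - real j \<le> 0" by simp
    then have "(real k - real j) * h \<le> 0" using assms by (simp add: mult_nonpos_nonneg)
    then show ?thesis using False assms unfolding ell_def eq by simp
  qed
qed

lemma eulX_sum: "eulX W t0 z0 h k = z0 - (\<Sum>j<k. h *\<^sub>R W (t0 - real j * h) (eulX W t0 z0 h j))"
  by (induction k) (simp_all add: algebra_simps)

lemma eulP_grid:
  assumes "h > 0" "k \<le> N"
  shows "eulP W t0 z0 h N (t0 - real k * h) = eulX W t0 z0 h k"
proof -
  have "(\<Sum>j<N. ell h t0 j (t0 - real k * h) *\<^sub>R W (t0 - real j * h) (eulX W t0 z0 h j))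
      = (\<Sum>j<N. if j \<in> {..<k} then h *\<^sub>R W (t0 - real j * h) (eulX W t0 z0 h j) else 0)"
    using ell_grid[OF assms(1)] by (intro sum.cong) auto
  also have "\<dots> = (\<Sum>j\<in>{..<N} \<inter> {..<k}. h *\<^sub>R W (t0 - real j * h) (eulX W t0 z0 h j))"
    by (rule sum.inter_restrict[symmetric]) simp
  also have "{..<N} \<inter> {..<k} = {..<k}" using assms(2) by auto
  finally show ?thesis unfolding eulP_def eulX_sum[of W t0 z0 h k] by simp
qed

lemma ell_mono:
  assumes "s \<le> t" shows "ell h t0 j t \<le> ell h t0 j s"
  using assms unfolding ell_def by (simp add: max_def min_def)

lemma ell_ne:
  assumes "s \<le> t" "ell h t0 j s \<noteq> ell h t0 j t"
  shows "s < t0 - real j * h \<and> t0 - real j * h < t + h"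
  using assms unfolding ell_def by (auto simp: max_def min_def split: if_splits)

lemma eulP_est:
  assumes h: "h > 0" and st: "t0 - real N * h \<le> s" "s \<le> t" "t \<le> t0"
    and cond: "\<And>j. j < N \<Longrightarrow> s < t0 - real j * h \<Longrightarrow> t0 - real j * h < t + h \<Longrightarrow>
                 norm (W (t0 - real j * h) (eulX W t0 z0 h j) - z) \<le> \<eta>"
  shows "norm (eulP W t0 z0 h N t - eulP W t0 z0 h N s - (t - s) *\<^sub>R z) \<le> (t - s) * \<eta>"
proof -
  define c where "c j = W (t0 - real j * h) (eulX W t0 z0 h j)" for j
  define a where "a j = ell h t0 j s - ell h t0 j t" for j
  have suma: "(\<Sum>j<N. a j) = t - s"
    unfolding a_def sum_subtractf ell_sum[OF h] using st h by simp
  have "eulP W t0 z0 h N t - eulP W t0 z0 h N s = (\<Sum>j<N. ell h t0 j s *\<^sub>R c j) - (\<Sum>j<N. ell h t0 j t *\<^sub>R c j)"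
    unfolding eulP_def c_def by simp
  also have "\<dots> = (\<Sum>j<N. a j *\<^sub>R c j)"
    unfolding a_def by (simp add: sum_subtractf[symmetric] scaleR_left_diff_distrib)
  finally have 1: "eulP W t0 z0 h N t - eulP W t0 z0 h N s = (\<Sum>j<N. a j *\<^sub>R c j)" .
  have 2: "(t - s) *\<^sub>R z = (\<Sum>j<N. a j *\<^sub>R z)" unfolding suma[symmetric] by (simp add: scaleR_sum_left)
  have "eulP W t0 z0 h N t - eulP W t0 z0 h N s - (t - s) *\<^sub>R z = (\<Sum>j<N. a j *\<^sub>R (c j - z))"
    unfolding 1 2 by (simp add: sum_subtractf[symmetric] scaleR_right_diff_distrib)
  also have "norm \<dots> \<le> (\<Sum>j<N. a j * \<eta>)"
  proof (rule order_trans[OF norm_sum], rule sum_mono)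
    fix j assume j: "j \<in> {..<N}"
    have a0: "a j \<ge> 0" unfolding a_def using ell_mono[OF st(2)] by simp
    show "norm (a j *\<^sub>R (c j - z)) \<le> a j * \<eta>"
    proof (cases "a j = 0")
      case True then show ?thesis by simp
    next
      case False
      then have "ell h t0 j s \<noteq> ell h t0 j t" unfolding a_def by simp
      from ell_ne[OF st(2) this] have "norm (c j - z) \<le> \<eta>" unfolding c_def using cond j by auto
      then show ?thesis using a0 by (simp add: mult_left_mono)
    qed
  qed
  also have "\<dots> = (t - s) * \<eta>" using suma by (simp flip: sum_distrib_right)
  finally show ?thesis .
qed



lemma tri3:
  fixes a b c x y :: "'b::real_normed_vector"
  shows "norm (a - b - c) \<le> norm (x - y - c) + norm (x - a) + norm (y - b)"
proof -
  have "a - b - c = (x - y - c) - (x - a) + (y - b)" by (simp add: algebra_simps)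
  then have "norm (a - b - c) \<le> norm ((x - y - c) - (x - a)) + norm (y - b)"
    by (metis norm_triangle_ineq)
  also have "norm ((x - y - c) - (x - a)) \<le> norm (x - y - c) + norm (x - a)"
    by (rule norm_triangle_ineq4)
  finally show ?thesis by simp
qed

lemma peano_backward:
  fixes W :: "real \<Rightarrow> 'b::euclidean_space \<Rightarrow> 'b"
  assumes contW: "continuous_on UNIV (\<lambda>p. W (fst p) (snd p))"
    and bndW: "\<And>t z. norm (W t z) \<le> M"
    and tau: "0 < \<tau>"
  obtains x where "continuous_on {t0-\<tau>..t0} x" "x t0 = z0"
    "\<And>t. t \<in> {t0-\<tau>..t0} \<Longrightarrow> (x has_vector_derivative W t (x t)) (at t within {t0-\<tau>..t0})"
    "\<And>t s. t \<in> {t0-\<tau>..t0} \<Longrightarrow> s \<in> {t0-\<tau>..t0} \<Longrightarrow> norm (x t - x s) \<le> M * \<bar>t - s\<bar>"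
proof -
  define S where "S = {t0-\<tau>..t0}"
  have M0: "0 \<le> M" using bndW[of 0 0] norm_ge_zero order_trans by blast
  define hh where "hh n = \<tau> / real (Suc n)" for n
  have hpos: "hh n > 0" for n unfolding hh_def using tau by simp
  have Nh: "real (Suc n) * hh n = \<tau>" for n unfolding hh_def by simp
  define F where "F n t = eulP W t0 z0 (hh n) (Suc n) t" for n t
  have F0: "F n t0 = z0" for n
    using eulP_grid[OF hpos[of n], of 0 "Suc n" W t0 z0] unfolding F_def by simp
  have lip1: "norm (F n t - F n s) \<le> (t - s) * M" if "s \<in> S" "t \<in> S" "s \<le> t" for n s t
    using eulP_est[OF hpos[of n], of t0 "Suc n" s t W z0 0 M] that bndW Nh unfolding F_def S_def by simp
  have lip: "norm (F n t - F n s) \<le> M * \<bar>t - s\<bar>" if "s \<in> S" "t \<in> S" for n s t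
  proof (cases "s \<le> t")
    case True then show ?thesis using lip1[OF that True] by (simp add: mult.commute)
  next
    case False then show ?thesis using lip1[OF that(2,1), of n] by (simp add: mult.commute norm_minus_commute)
  qed
  have Fb: "norm (F n t) \<le> norm z0 + M * \<tau>" if "t \<in> S" for n t
  proof -
    have "t0 \<in> S" using tau unfolding S_def by simp
    then have "norm (F n t - F n t0) \<le> M * \<bar>t - t0\<bar>" using lip that by blast
    also have "\<dots> \<le> M * \<tau>" using that M0 unfolding S_def by (intro mult_left_mono) auto
    moreover have "norm (F n t) \<le> norm z0 + norm (F n t - F n t0)"
      using norm_triangle_sub[of "F n t" "F n t0"] F0[of n] by simp
    ultimately show ?thesis by linarith
  qed
  have cS: "compact S" unfolding S_def by simp
  obtain g k where gc: "continuous_on S g" and k: "strict_mono (k :: nat \<Rightarrow> nat)"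
    and U: "\<And>e. 0 < e \<Longrightarrow> \<exists>N. \<forall>n x. n \<ge> N \<and> x \<in> S \<longrightarrow> norm (F (k n) x - g x) < e"
  proof (rule Arzela_Ascoli[OF cS, of F "norm z0 + M * \<tau>"])
    show "\<And>n x. x \<in> S \<Longrightarrow> norm (F n x) \<le> norm z0 + M * \<tau>" by (rule Fb)
    fix x e assume x: "x \<in> S" and e: "(0::real) < e"
    show "\<exists>d>0. \<forall>n y. y \<in> S \<and> norm (x - y) < d \<longrightarrow> norm (F n x - F n y) < e"
    proof (intro exI[of _ "e / (M + 1)"] conjI allI impI)
      show "0 < e / (M + 1)" using e M0 by simp
      fix n y assume y: "y \<in> S \<and> norm (x - y) < e / (M + 1)"
      have "norm (F n x - F n y) \<le> M * \<bar>x - y\<bar>" using lip x y by blast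
      also have "\<dots> \<le> M * (e / (M + 1))" using y M0 by (intro mult_left_mono) auto
      also have "\<dots> < e" using e M0 by (simp add: field_simps)
      finally show "norm (F n x - F n y) < e" .
    qed
  qed blast
  have gt0: "g t0 = z0"
  proof -
    have "norm (z0 - g t0) < e" if e: "e > 0" for e
    proof -
      obtain N where "\<forall>n x. N \<le> n \<and> x \<in> S \<longrightarrow> norm (F (k n) x - g x) < e" using U[OF e] by blast
      moreover have "t0 \<in> S" using tau unfolding S_def by simp
      ultimately show ?thesis using F0[of "k N"] by auto
    qed
    then show ?thesis by (metis eq_iff_diff_eq_0 norm_le_zero_iff not_less order_refl)
  qed
  have glip: "norm (g t - g s) \<le> M * \<bar>t - s\<bar>" if ts: "t \<in> S" "s \<in> S" for t s
  proof (rule field_le_epsilon)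
    fix e :: real assume e: "0 < e"
    obtain N where N: "\<And>n x. n \<ge> N \<Longrightarrow> x \<in> S \<Longrightarrow> norm (F (k n) x - g x) < e/2"
      using U[of "e/2"] e by auto
    have "norm (g t - g s) \<le> norm (F (k N) t - F (k N) s) + norm (F (k N) t - g t) + norm (F (k N) s - g s)"
      using tri3[of "g t" "g s" 0 "F (k N) t" "F (k N) s"] by simp
    also have "\<dots> \<le> M * \<bar>t - s\<bar> + e"
      using lip[OF ts(2,1), of "k N"] N[of N t] N[of N s] ts by simp
    finally show "norm (g t - g s) \<le> M * \<bar>t - s\<bar> + e" .
  qed
  have deriv: "(g has_vector_derivative W t (g t)) (at t within S)" if t: "t \<in> S" for t
  proof -
    define D where "D = W t (g t)"
    show ?thesis unfolding has_vector_derivative_def has_derivative_within_alt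
    proof (intro conjI allI impI)
      show "bounded_linear (\<lambda>h. h *\<^sub>R W t (g t))" by (rule bounded_linear_scaleR_left)
      fix e :: real assume e: "0 < e"
      have "isCont (\<lambda>p. W (fst p) (snd p)) (t, g t)"
        using contW by (simp add: continuous_on_eq_continuous_at)
      from this[unfolded continuous_at_eps_delta, rule_format, OF e]
      obtain \<delta> where \<delta>: "\<delta> > 0" "\<And>p. dist p (t, g t) < \<delta> \<Longrightarrow> dist (W (fst p) (snd p)) D < e"
        unfolding D_def by auto
      define \<rho> where "\<rho> = \<delta> / (4 * (M + 1))"
      have \<rho>: "\<rho> > 0" unfolding \<rho>_def using \<delta> M0 by simp
      show "\<exists>d>0. \<forall>s\<in>S. norm (s - t) < d \<longrightarrow> norm (g s - g t - (s - t) *\<^sub>R W t (g t)) \<le> e * norm (s - t)"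
      proof (intro exI[of _ \<rho>] conjI ballI impI)
        show "\<rho> > 0" by (rule \<rho>)
        fix s assume s: "s \<in> S" and st: "norm (s - t) < \<rho>"
        show "norm (g s - g t - (s - t) *\<^sub>R W t (g t)) \<le> e * norm (s - t)"
        proof (rule field_le_epsilon)
          fix \<epsilon> :: real assume \<epsilon>: "0 < \<epsilon>"
          obtain N1 where N1: "\<And>n x. n \<ge> N1 \<Longrightarrow> x \<in> S \<Longrightarrow> norm (F (k n) x - g x) < min \<rho> (\<epsilon>/2)"
            using U[of "min \<rho> (\<epsilon>/2)"] \<rho> \<epsilon> by auto
          obtain N2 where N2: "inverse (real (Suc N2)) < \<rho> / \<tau>" using reals_Archimedean[of "\<rho> / \<tau>"] \<rho> tau by auto
          define m where "m = k (max N1 N2)"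
          have m1: "norm (F m x - g x) < min \<rho> (\<epsilon>/2)" if "x \<in> S" for x
            unfolding m_def using N1 that by simp
          have "N2 \<le> m" unfolding m_def using seq_suble[OF k, of "max N1 N2"] by simp
          then have "hh m \<le> hh N2" unfolding hh_def using tau by (intro divide_left_mono) auto
          also have "hh N2 < \<rho>" using N2 tau unfolding hh_def by (simp add: field_simps)
          finally have hm: "hh m < \<rho>" .
          define a where "a = min s t"
          define b where "b = max s t"
          have ab: "a \<in> S" "b \<in> S" "a \<le> b" "b - a = \<bar>s - t\<bar>" unfolding a_def b_def using s t unfolding S_def by auto
          have est: "norm (F m b - F m a - (b - a) *\<^sub>R D) \<le> (b - a) * e"
            unfolding F_def
          proof (rule eulP_est[OF hpos[of m]])
            show "t0 - real (Suc m) * hh m \<le> a" "a \<le> b" "b \<le> t0" using ab Nh unfolding S_def by auto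
            fix j assume j: "j < Suc m" and j1: "a < t0 - real j * hh m" and j2: "t0 - real j * hh m < b + hh m"
            define \<sigma> where "\<sigma> = t0 - real j * hh m"
            have "real j * hh m \<le> real (Suc m) * hh m" using j hpos[of m] by (intro mult_right_mono) auto
            then have "real j * hh m \<le> \<tau>" using Nh[of m] by linarith
            moreover have "0 \<le> real j * hh m" using hpos[of m] by simp
            ultimately have \<sigma>S: "\<sigma> \<in> S" unfolding \<sigma>_def S_def by simp
            have X: "eulX W t0 z0 (hh m) j = F m \<sigma>"
              unfolding F_def \<sigma>_def using eulP_grid[OF hpos[of m], of j "Suc m" W t0 z0] j by simp
            have d1: "\<bar>\<sigma> - t\<bar> < 2 * \<rho>" using j1 j2 hm st ab unfolding \<sigma>_def a_def b_def by auto
            have "norm (F m \<sigma> - g t) \<le> norm (F m \<sigma> - F m t) + norm (F m t - g t)"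
              by (rule norm_diff_triangle_le[OF order_refl order_refl])
            also have "\<dots> \<le> M * (2 * \<rho>) + \<rho>"
            proof (rule add_mono)
              have "norm (F m \<sigma> - F m t) \<le> M * \<bar>\<sigma> - t\<bar>" using lip[OF t \<sigma>S, of m] .
              also have "\<dots> \<le> M * (2 * \<rho>)" using d1 M0 by (intro mult_left_mono) auto
              finally show "norm (F m \<sigma> - F m t) \<le> M * (2 * \<rho>)" .
              show "norm (F m t - g t) \<le> \<rho>" using m1[OF t] by simp
            qed
            finally have d2: "norm (F m \<sigma> - g t) \<le> M * (2 * \<rho>) + \<rho>" .
            have "dist (\<sigma>, F m \<sigma>) (t, g t) \<le> \<bar>\<sigma> - t\<bar> + norm (F m \<sigma> - g t)"
              using norm_Pair_le[of "\<sigma> - t" "F m \<sigma> - g t"] by (simp add: dist_norm)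
            also have "\<dots> < 2 * \<rho> + (M * (2 * \<rho>) + \<rho>)" using d1 d2 by linarith
            also have "\<dots> = (3 + 2 * M) * \<rho>" by (simp add: algebra_simps)
            also have "\<dots> \<le> (4 * (M + 1)) * \<rho>" using M0 \<rho> by (intro mult_right_mono) auto
            also have "(4 * (M + 1)) * \<rho> = \<delta>" unfolding \<rho>_def using M0 by simp
            finally have "dist (W \<sigma> (F m \<sigma>)) D < e" using \<delta>(2)[of "(\<sigma>, F m \<sigma>)"] by simp
            then show "norm (W (t0 - real j * hh m) (eulX W t0 z0 (hh m) j) - D) \<le> e"
              unfolding X \<sigma>_def[symmetric] by (simp add: dist_norm)
          qed
          have est2: "norm (F m s - F m t - (s - t) *\<^sub>R D) \<le> \<bar>s - t\<bar> * e"
          proof (cases "s \<le> t")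
            case True
            then have "F m s - F m t - (s - t) *\<^sub>R D = - (F m b - F m a - (b - a) *\<^sub>R D)"
              unfolding a_def b_def by (simp add: algebra_simps)
            then show ?thesis using est ab by (simp only: norm_minus_cancel)
          next
            case False
            then show ?thesis using est ab unfolding a_def b_def by simp
          qed
          have "norm (g s - g t - (s - t) *\<^sub>R D) \<le> norm (F m s - F m t - (s - t) *\<^sub>R D) + norm (F m s - g s) + norm (F m t - g t)"
            by (rule tri3)
          also have "\<dots> \<le> \<bar>s - t\<bar> * e + \<epsilon>/2 + \<epsilon>/2"
            using est2 m1[OF s] m1[OF t] by (intro add_mono) auto
          finally show "norm (g s - g t - (s - t) *\<^sub>R W t (g t)) \<le> e * norm (s - t) + \<epsilon>"
            unfolding D_def by (simp add: mult.commute)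
        qed
      qed
    qed
  qed
  show ?thesis
    apply (rule that[of g])
    using gc gt0 deriv glip unfolding S_def by auto
qed



lemma E_convex:
  fixes L :: "'a::euclidean_space lagrangian"
  assumes L2: "L2 T L" and t: "t \<in> {0..T}"
  shows "convex {(v, s). L t x v \<le> ereal s}"
  unfolding convex_def
proof (intro ballI allI impI)
  fix y1 y2 :: "'a \<times> real" and u w :: real
  assume y1: "y1 \<in> {(v, s). L t x v \<le> ereal s}" and y2: "y2 \<in> {(v, s). L t x v \<le> ereal s}"
    and u: "0 \<le> u" and w: "0 \<le> w" and uw: "u + w = 1"
  obtain v1 s1 where 1: "y1 = (v1, s1)" "L t x v1 \<le> ereal s1" using y1 by auto
  obtain v2 s2 where 2: "y2 = (v2, s2)" "L t x v2 \<le> ereal s2" using y2 by auto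
  have w1: "w = 1 - u" using uw by simp
  have "L t x (u *\<^sub>R v1 + (1 - u) *\<^sub>R v2) \<le> ereal (u * s1 + (1 - u) * s2)"
  proof (cases "u = 0 \<or> u = 1")
    case True then show ?thesis using 1 2 by auto
  next
    case False
    then have u01: "0 < u" "u < 1" using u uw w by auto
    have "L t x (u *\<^sub>R v1 + (1 - u) *\<^sub>R v2) \<le> ereal u * L t x v1 + ereal (1 - u) * L t x v2"
      using L2 t u01 unfolding L2_def by blast
    also have "\<dots> \<le> ereal u * ereal s1 + ereal (1 - u) * ereal s2"
      using u01 1 2 by (intro add_mono ereal_mult_left_mono) auto
    also have "\<dots> = ereal (u * s1 + (1 - u) * s2)" by simp
    finally show ?thesis .
  qed
  then show "u *\<^sub>R y1 + w *\<^sub>R y2 \<in> {(v, s). L t x v \<le> ereal s}"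
    unfolding 1 2 w1 by simp
qed

lemma E_closed:
  fixes L :: "'a::euclidean_space lagrangian"
  assumes L1: "L1 T L" and t: "t \<in> {0..T}"
  shows "closed {(v, s). L t x v \<le> ereal s}"
  unfolding closed_sequential_limits
proof (intro allI impI, elim conjE)
  fix z :: "nat \<Rightarrow> 'a \<times> real" and l
  assume z: "\<forall>n. z n \<in> {(v, s). L t x v \<le> ereal s}" and lim: "z \<longlonglongrightarrow> l"
  have l1: "(\<lambda>n. fst (z n)) \<longlonglongrightarrow> fst l" "(\<lambda>n. snd (z n)) \<longlonglongrightarrow> snd l"
    using lim by (auto intro: tendsto_fst tendsto_snd)
  have "L t x (fst l) \<le> liminf (\<lambda>n. L ((\<lambda>_. t) n) ((\<lambda>_. x) n) (fst (z n)))"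
  proof -
    have "t \<in> {0..T} \<and> (\<forall>n. (\<lambda>_. t) n \<in> {0..T}) \<and> (\<lambda>_. t) \<longlonglongrightarrow> t \<and> (\<lambda>_. x) \<longlonglongrightarrow> x \<and> (\<lambda>n. fst (z n)) \<longlonglongrightarrow> fst l"
      using t l1(1) by simp
    from L1[unfolded L1_def, rule_format, OF this] show ?thesis .
  qed
  also have "\<dots> \<le> liminf (\<lambda>n. ereal (snd (z n)))"
    using z by (intro Liminf_mono) (auto simp: case_prod_beta)
  also have "\<dots> = ereal (snd l)"
    using l1(2) by (intro lim_imp_Liminf) auto
  finally show "l \<in> {(v, s). L t x v \<le> ereal s}" by (cases l) auto
qed

lemma E_nonempty:
  fixes L :: "'a::euclidean_space lagrangian"
  assumes L2: "L2 T L" and t: "t \<in> {0..T}"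
  shows "{(v, s). L t x v \<le> ereal s} \<noteq> {}"
proof -
  obtain v where "L t x v \<noteq> \<infinity>" "L t x v \<noteq> -\<infinity>" using L2 t unfolding L2_def by blast
  then obtain c where "L t x v = ereal c" by (cases "L t x v") auto
  then have "(v, c) \<in> {(v, s). L t x v \<le> ereal s}" by simp
  then show ?thesis by blast
qed

lemma E_lsc:
  fixes L :: "'a::euclidean_space lagrangian"
  assumes L3: "L3 T L" and KT: "\<And>q. q \<in> K \<Longrightarrow> fst q \<in> {0..T}"
    and p: "p \<in> K" and y: "y \<in> {(v, s). L (fst p) (snd p) v \<le> ereal s}" and e: "0 < e"
  shows "\<exists>d>0. \<forall>q\<in>K. dist q p < d \<longrightarrow> (\<exists>y'\<in>{(v, s). L (fst q) (snd q) v \<le> ereal s}. dist y' y < e)"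
proof (rule ccontr)
  define E where "E q = {(v, s). L (fst q) (snd q) v \<le> ereal s}" for q :: "real \<times> 'a"
  assume nt: "\<not> ?thesis"
  have nt2: "\<forall>d>0. \<exists>q\<in>K. dist q p < d \<and> \<not> (\<exists>y'\<in>E q. dist y' y < e)"
    using nt unfolding E_def by blast
  have "\<forall>n. \<exists>q\<in>K. dist q p < inverse (real (Suc n)) \<and> \<not> (\<exists>y'\<in>E q. dist y' y < e)"
  proof
    fix n :: nat
    have "inverse (real (Suc n)) > 0" by simp
    then show "\<exists>q\<in>K. dist q p < inverse (real (Suc n)) \<and> \<not> (\<exists>y'\<in>E q. dist y' y < e)"
      using nt2 by blast
  qed
  then have "\<forall>n. \<exists>q. q \<in> K \<and> dist q p < inverse (real (Suc n)) \<and> \<not> (\<exists>y'\<in>E q. dist y' y < e)"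
    by blast
  from choice[OF this] obtain qs where qs0:
    "\<forall>n. qs n \<in> K \<and> dist (qs n) p < inverse (real (Suc n)) \<and> \<not> (\<exists>y'\<in>E (qs n). dist y' y < e)"
    by blast
  have qs: "\<And>n. qs n \<in> K" "\<And>n. dist (qs n) p < inverse (real (Suc n))"
    "\<And>n. \<not> (\<exists>y'\<in>E (qs n). dist y' y < e)"
    using qs0 by blast+
  have qlim: "qs \<longlonglongrightarrow> p"
  proof (rule metric_LIMSEQ_I)
    fix r :: real assume r: "0 < r"
    obtain N where N: "inverse (real (Suc N)) < r" using reals_Archimedean[OF r] by auto
    show "\<exists>no. \<forall>n\<ge>no. dist (qs n) p < r"
    proof (intro exI allI impI)
      fix n assume "N \<le> n"
      then have "inverse (real (Suc n)) \<le> inverse (real (Suc N))" by (simp add: le_imp_inverse_le)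
      then show "dist (qs n) p < r" using qs(2)[of n] N by linarith
    qed
  qed
  obtain v s where vs: "y = (v, s)" "L (fst p) (snd p) v \<le> ereal s" using y by auto
  have tlim: "(\<lambda>n. fst (qs n)) \<longlonglongrightarrow> fst p" "(\<lambda>n. snd (qs n)) \<longlonglongrightarrow> snd p"
    using qlim by (auto intro: tendsto_fst tendsto_snd)
  obtain vn where vn: "vn \<longlonglongrightarrow> v" "(\<lambda>n. L (fst (qs n)) (snd (qs n)) (vn n)) \<longlonglongrightarrow> L (fst p) (snd p) v"
  proof -
    have "fst p \<in> {0..T} \<and> (\<forall>n. fst (qs n) \<in> {0..T}) \<and> (\<lambda>n. fst (qs n)) \<longlonglongrightarrow> fst p \<and> (\<lambda>n. snd (qs n)) \<longlonglongrightarrow> snd p"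
      using KT[OF p] KT[OF qs(1)] tlim by blast
    from L3[unfolded L3_def, rule_format, OF this, of v] show ?thesis using that by blast
  qed
  have "L (fst p) (snd p) v < ereal (s + e/2)" using vs(2) e by (simp add: le_less_trans)
  then have ev1: "eventually (\<lambda>n. L (fst (qs n)) (snd (qs n)) (vn n) < ereal (s + e/2)) sequentially"
    using vn(2) by (rule order_tendstoD(2)[rotated])
  have ev2: "eventually (\<lambda>n. dist (vn n) v < e/2) sequentially"
    using tendstoD[OF vn(1), of "e/2"] e by simp
  obtain n where n1: "L (fst (qs n)) (snd (qs n)) (vn n) < ereal (s + e/2)" and n2: "dist (vn n) v < e/2"
    using eventually_happens[OF eventually_conj[OF ev1 ev2]] by auto
  have "(vn n, s + e/2) \<in> E (qs n)" using n1 unfolding E_def by simp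
  moreover have "dist (vn n, s + e/2) y < e"
  proof -
    have "dist (vn n, s + e/2) y \<le> norm (vn n - v) + norm (s + e/2 - s)"
      using norm_Pair_le[of "vn n - v" "s + e/2 - s"] unfolding vs(1) by (simp add: dist_norm)
    also have "\<dots> < e" using n2 e by (simp add: dist_norm)
    finally show ?thesis .
  qed
  ultimately show False using qs(3)[of n] by blast
qed



theorem lemma5p4:
  fixes T :: real and L :: "'a::euclidean_space lagrangian"
    and t0 :: real and x0 :: 'a and u0 :: real and v0 :: 'a
  assumes "L1 T L" and "L2 T L" and "L3 T L"
    and "t0 \<in> {0<..T}"
    and "v0 \<in> domL L t0 x0"
  shows "\<exists>\<tau>>0. \<exists>(x::real \<Rightarrow> 'a) (u::real \<Rightarrow> real) x' u'.
           t0 - \<tau> \<ge> 0 \<and>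
           (\<forall>t\<in>{t0-\<tau>..t0}. (x has_vector_derivative x' t) (at t within {t0-\<tau>..t0}) \<and>
                              (u has_real_derivative u' t) (at t within {t0-\<tau>..t0})) \<and>
           continuous_on {t0-\<tau>..t0} x' \<and> continuous_on {t0-\<tau>..t0} u' \<and>
           x t0 = x0 \<and> u t0 = u0 \<and>
           (\<forall>t\<in>{t0-\<tau>..t0}. (x' t, u' t) \<in> Qset L t (x t)) \<and>
           x' t0 = v0 \<and> ereal (u' t0) = - L t0 x0 v0"
proof -
  note L1 = assms(1) and L2 = assms(2) and L3 = assms(3)
  have t0: "0 < t0" "t0 \<le> T" using assms(4) by auto
  obtain c where Lc: "L t0 x0 v0 = ereal c"
    using assms(5) unfolding domL_def by (cases "L t0 x0 v0") auto
  define K :: "(real \<times> 'a) set" where "K = {0..t0} \<times> cball x0 1"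
  define E where "E p = {(v, s). L (fst p) (snd p) v \<le> ereal s}" for p :: "real \<times> 'a"
  have KT: "fst q \<in> {0..T}" if "q \<in> K" for q using that t0 unfolding K_def by auto
  have cK: "compact K" unfolding K_def by (intro compact_Times) auto
  have p0: "(t0, x0) \<in> K" unfolding K_def using t0 by auto
  have y0: "(v0, c) \<in> E (t0, x0)" unfolding E_def using Lc by simp
  obtain f where fc: "continuous_on K f" and f0: "f (t0, x0) = (v0, c)" and fE: "\<And>p. p \<in> K \<Longrightarrow> f p \<in> E p"
  proof -
    have "\<exists>f. continuous_on K f \<and> f (t0, x0) = (v0, c) \<and> (\<forall>p\<in>K. f p \<in> E p)"
    proof (rule michael_sel[of K E "(t0, x0)" "(v0, c)"])
      show "compact K" by (rule cK)
      show "(t0, x0) \<in> K" by (rule p0)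
      show "(v0, c) \<in> E (t0, x0)" by (rule y0)
      show "convex (E p)" if "p \<in> K" for p unfolding E_def by (rule E_convex[OF L2 KT[OF that]])
      show "closed (E p)" if "p \<in> K" for p unfolding E_def by (rule E_closed[OF L1 KT[OF that]])
      show "E p \<noteq> {}" if "p \<in> K" for p unfolding E_def by (rule E_nonempty[OF L2 KT[OF that]])
      show "\<exists>d>0. \<forall>q\<in>K. dist q p < d \<longrightarrow> (\<exists>y'\<in>E q. dist y' y < e)"
        if "p \<in> K" "y \<in> E p" "0 < e" for p y e
        using E_lsc[OF L3 KT, of K p y e] that unfolding E_def by blast
    qed
    then show ?thesis using that by blast
  qed
  have "bounded (f ` K)" by (rule compact_imp_bounded[OF compact_continuous_image[OF fc cK]])
  then obtain B where B: "B > 0" "\<And>p. p \<in> K \<Longrightarrow> norm (f p) \<le> B"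
    unfolding bounded_pos by blast
  obtain fe where fec: "continuous_on UNIV fe" and feB: "fe ` UNIV \<subseteq> cball 0 B"
    and fef: "\<And>p. p \<in> K \<Longrightarrow> fe p = f p"
  proof (rule Dugundji[of "cball 0 B" UNIV K f])
    show "convex (cball (0::'a \<times> real) B)" by simp
    show "cball (0::'a \<times> real) B \<noteq> {}" using B by simp
    show "closedin (top_of_set UNIV) K" using compact_imp_closed[OF cK] by simp
    show "continuous_on K f" by (rule fc)
    show "f ` K \<subseteq> cball 0 B" using B by auto
  qed auto
  have feB': "norm (fe p) \<le> B" for p
  proof -
    have "fe p \<in> cball 0 B" using feB by blast
    then show ?thesis by simp
  qed
  define W where "W t z = (fst (fe (t, fst z)), - snd (fe (t, fst z)))" for t and z :: "'a \<times> real"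
  have contW: "continuous_on UNIV (\<lambda>p. W (fst p) (snd p))"
  proof -
    have "continuous_on UNIV (\<lambda>p::real \<times> ('a \<times> real). fe (fst p, fst (snd p)))"
      by (rule continuous_on_compose2[OF fec]) (auto intro!: continuous_intros)
    then show ?thesis unfolding W_def by (intro continuous_intros)
  qed
  have bndW: "norm (W t z) \<le> B" for t z
  proof -
    have "norm (W t z) = norm (fe (t, fst z))"
      unfolding W_def by (cases "fe (t, fst z)") (simp add: norm_Pair)
    then show ?thesis using feB' by simp
  qed
  define \<tau> where "\<tau> = min t0 (1 / B)"
  have tau: "0 < \<tau>" "\<tau> \<le> t0" "B * \<tau> \<le> 1" unfolding \<tau>_def using t0 B
    by (auto simp: min_def field_simps)
  define S where "S = {t0-\<tau>..t0}"
  obtain z where zc: "continuous_on S z" and z0: "z t0 = (x0, u0)"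
    and zd: "\<And>t. t \<in> S \<Longrightarrow> (z has_vector_derivative W t (z t)) (at t within S)"
    and zl: "\<And>t s. t \<in> S \<Longrightarrow> s \<in> S \<Longrightarrow> norm (z t - z s) \<le> B * \<bar>t - s\<bar>"
    using peano_backward[OF contW bndW tau(1), of t0 "(x0, u0)"] unfolding S_def by blast
  define x where "x t = fst (z t)" for t
  define u where "u t = snd (z t)" for t
  define x' where "x' t = fst (fe (t, x t))" for t
  define u' where "u' t = - snd (fe (t, x t))" for t
  have Wz: "W t (z t) = (x' t, u' t)" for t unfolding W_def x'_def u'_def x_def by simp
  have t0S: "t0 \<in> S" unfolding S_def using tau by simp
  have inK: "(t, x t) \<in> K" if t: "t \<in> S" for t
  proof -
    have xe: "x t - x0 = fst (z t - z t0)" unfolding x_def z0 by simp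
    have "norm (fst (z t - z t0)) \<le> norm (z t - z t0)"
      using norm_fst_le[of "fst (z t - z t0)" "snd (z t - z t0)"] unfolding prod.collapse .
    then have "norm (x t - x0) \<le> norm (z t - z t0)" unfolding xe .
    also have "\<dots> \<le> B * \<bar>t - t0\<bar>" using zl[OF t t0S] .
    also have "\<dots> \<le> B * \<tau>" using t B unfolding S_def by (intro mult_left_mono) auto
    finally have "dist x0 (x t) \<le> 1" using tau by (simp add: dist_norm norm_minus_commute)
    then show ?thesis using t tau unfolding K_def S_def by auto
  qed
  have xd: "(x has_vector_derivative x' t) (at t within S)" if t: "t \<in> S" for t
  proof -
    have "((\<lambda>s. fst (z s)) has_derivative (\<lambda>h. fst (h *\<^sub>R W t (z t)))) (at t within S)"
      using zd[OF t] unfolding has_vector_derivative_def by (rule has_derivative_fst)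
    then show ?thesis unfolding has_vector_derivative_def x_def Wz by simp
  qed
  have ud: "(u has_real_derivative u' t) (at t within S)" if t: "t \<in> S" for t
  proof -
    have "((\<lambda>s. snd (z s)) has_derivative (\<lambda>h. snd (h *\<^sub>R W t (z t)))) (at t within S)"
      using zd[OF t] unfolding has_vector_derivative_def by (rule has_derivative_snd)
    then show ?thesis unfolding has_real_derivative_iff_has_vector_derivative has_vector_derivative_def u_def Wz
      by simp
  qed
  have xc: "continuous_on S x" unfolding x_def using zc by (intro continuous_intros)
  have fexc: "continuous_on S (\<lambda>t. fe (t, x t))"
    by (rule continuous_on_compose2[OF fec]) (auto intro!: continuous_intros xc)
  have x'c: "continuous_on S x'" unfolding x'_def using fexc by (intro continuous_intros)
  have u'c: "continuous_on S u'" unfolding u'_def using fexc by (intro continuous_intros)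
  have xt0: "x t0 = x0" and ut0: "u t0 = u0" unfolding x_def u_def z0 by simp_all
  have Q: "(x' t, u' t) \<in> Qset L t (x t)" if t: "t \<in> S" for t
  proof -
    have "fe (t, x t) \<in> E (t, x t)" using fef[OF inK[OF t]] fE[OF inK[OF t]] by simp
    then show ?thesis unfolding E_def Qset_def x'_def u'_def by (cases "fe (t, x t)") auto
  qed
  have fet0: "fe (t0, x0) = (v0, c)" using fef[OF p0] f0 by simp
  have x't0: "x' t0 = v0" unfolding x'_def xt0 fet0 by simp
  have u't0: "ereal (u' t0) = - L t0 x0 v0" unfolding u'_def xt0 fet0 Lc by simp
  have "t0 - \<tau> \<ge> 0 \<and>
           (\<forall>t\<in>{t0-\<tau>..t0}. (x has_vector_derivative x' t) (at t within {t0-\<tau>..t0}) \<and>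
                              (u has_real_derivative u' t) (at t within {t0-\<tau>..t0})) \<and>
           continuous_on {t0-\<tau>..t0} x' \<and> continuous_on {t0-\<tau>..t0} u' \<and>
           x t0 = x0 \<and> u t0 = u0 \<and>
           (\<forall>t\<in>{t0-\<tau>..t0}. (x' t, u' t) \<in> Qset L t (x t)) \<and>
           x' t0 = v0 \<and> ereal (u' t0) = - L t0 x0 v0"
    using tau xd ud x'c u'c xt0 ut0 Q x't0 u't0 unfolding S_def by auto
  then show ?thesis using tau(1) by blast
qed

end
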